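(* Let $0<\alpha<\pi/4$, $\beta=\pi/4$, and let $F,G_1,G_2$, $X_{\pm\pm}$, $s_{\max}$, $v$ be as in the context. Let $\theta(\alpha)=\arcsin\left(\frac{-2\sqrt2\sin\alpha\cos\alpha}{1+\cos^2\alpha}\right)$ and write $c=\cos\theta(\alpha)$, $\sigma=\sin\theta(\alpha)$. Then $$e^{v(s_{\max})X_{++}}=\begin{pmatrix}0&-1&0\\ c&0&\sigma\\ -\sigma&0&c\end{pmatrix},\quad e^{v(s_{\max})X_{+-}}=\begin{pmatrix}0&-c&-\sigma\\ 1&0&0\\ 0&-\sigma&c\end{pmatrix},$$ $$e^{v(s_{\max})X_{--}}=\begin{pmatrix}0&-1&0\\ c&0&-\sigma\\ \sigma&0&c\end{pmatrix},\quad e^{v(s_{\max})X_{-+}}=\begin{pmatrix}0&-c&\sigma\\ 1&0&0\\ 0&\sigma&c\end{pmatrix}.$$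
   Context: $F=\cos\alpha\begin{pmatrix}0&-1&0\\1&0&0\\0&0&0\end{pmatrix}$, $G_1=\sin\alpha\sin\beta\begin{pmatrix}0&0&0\\0&0&-1\\0&1&0\end{pmatrix}$, $G_2=\sin\alpha\cos\beta\begin{pmatrix}0&0&-1\\0&0&0\\1&0&0\end{pmatrix}$, and $X_{ab}=F+aG_1+bG_2$ for $a,b\in\{+1,-1\}$ (written $X_{++},X_{+-},X_{--},X_{-+}$). $s_{\max}=\arccos\left(-\frac{\sin^2\alpha}{1+\cos^2\alpha}\right)$. For $s\in[0,s_{\max}]$, $v(s)=\arccos\left[\frac{d-A(s)-B(s)-C(s)}{e-A(s)+B(s)}\right]$ with $A(s)=8\cos\alpha\sin^2\alpha\sin s$, $B(s)=2\sin^2(2\alpha)\cos s$, $C(s)=4\sin^4\alpha\cos(2s)$, $d=\sin^2(2\alpha)$, $e=5+2\cos2\alpha+\cos4\alpha$; this is the duration of interior bang arcs of normal extremals of $\dot x=(F+u_1G_1+u_2G_2)x$ on $S^2$ starting from $(0,0,1)$ whose first bang arc has duration $s$. *)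

theory Defs
  imports "HOL-Analysis.Analysis"
begin

text \<open>3x3 real matrices are rendered as real^3^3 (row-major: A $ i $ j is row i, column j).
  Matrix product is (**), identity is mat 1.\<close>

fun mat_pow :: "real^3^3 \<Rightarrow> nat \<Rightarrow> real^3^3" where
  "mat_pow A 0 = mat 1"
| "mat_pow A (Suc k) = A ** mat_pow A k"

definition mat_exp :: "real^3^3 \<Rightarrow> real^3^3" where
  "mat_exp A = (\<Sum>k. (1 / fact k) *\<^sub>R mat_pow A k)"

definition mat3 :: "real \<Rightarrow> real \<Rightarrow> real \<Rightarrow> real \<Rightarrow> real \<Rightarrow> real \<Rightarrow> real \<Rightarrow> real \<Rightarrow> real \<Rightarrow> real^3^3" where
  "mat3 a11 a12 a13 a21 a22 a23 a31 a32 a33 =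
     vector [vector [a11, a12, a13], vector [a21, a22, a23], vector [a31, a32, a33]]"

definition Fm :: "real \<Rightarrow> real^3^3" where
  "Fm \<alpha> = cos \<alpha> *\<^sub>R mat3 0 (-1) 0  1 0 0  0 0 0"

definition G1m :: "real \<Rightarrow> real \<Rightarrow> real^3^3" where
  "G1m \<alpha> \<beta> = (sin \<alpha> * sin \<beta>) *\<^sub>R mat3 0 0 0  0 0 (-1)  0 1 0"

definition G2m :: "real \<Rightarrow> real \<Rightarrow> real^3^3" where
  "G2m \<alpha> \<beta> = (sin \<alpha> * cos \<beta>) *\<^sub>R mat3 0 0 (-1)  0 0 0  1 0 0"

definition Xm :: "real \<Rightarrow> real \<Rightarrow> real \<Rightarrow> real \<Rightarrow> real^3^3" where
  "Xm \<alpha> \<beta> a b = Fm \<alpha> + a *\<^sub>R G1m \<alpha> \<beta> + b *\<^sub>R G2m \<alpha> \<beta>"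

definition s_max :: "real \<Rightarrow> real" where
  "s_max \<alpha> = arccos (- (sin \<alpha>)\<^sup>2 / (1 + (cos \<alpha>)\<^sup>2))"

definition vA :: "real \<Rightarrow> real \<Rightarrow> real" where
  "vA \<alpha> s = 8 * cos \<alpha> * (sin \<alpha>)\<^sup>2 * sin s"
definition vB :: "real \<Rightarrow> real \<Rightarrow> real" where
  "vB \<alpha> s = 2 * (sin (2 * \<alpha>))\<^sup>2 * cos s"
definition vC :: "real \<Rightarrow> real \<Rightarrow> real" where
  "vC \<alpha> s = 4 * (sin \<alpha>) ^ 4 * cos (2 * s)"
definition vd :: "real \<Rightarrow> real" where
  "vd \<alpha> = (sin (2 * \<alpha>))\<^sup>2"
definition ve :: "real \<Rightarrow> real" where
  "ve \<alpha> = 5 + 2 * cos (2 * \<alpha>) + cos (4 * \<alpha>)"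

definition v :: "real \<Rightarrow> real \<Rightarrow> real" where
  "v \<alpha> s = arccos ((vd \<alpha> - vA \<alpha> s - vB \<alpha> s - vC \<alpha> s) / (ve \<alpha> - vA \<alpha> s + vB \<alpha> s))"

definition theta :: "real \<Rightarrow> real" where
  "theta \<alpha> = arcsin (- 2 * sqrt 2 * sin \<alpha> * cos \<alpha> / (1 + (cos \<alpha>)\<^sup>2))"

end

theory Submission
  imports Defs
begin

lemma mat_pow_scale: "mat_pow (t *\<^sub>R X) k = t^k *\<^sub>R mat_pow X k"
  by (induction k) (simp_all add: scalar_matrix_assoc[symmetric] matrix_scalar_ac)

lemma neg_mmult: "(- A) ** (B::real^'n^'n) = - (A ** B)"
  by (simp add: matrix_matrix_mult_def vec_eq_iff sum_negf)

lemma mat_pow_cyc: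
  assumes X3: "X ** (X ** X) = - X"
  shows "mat_pow X (2*m+1) = (-1)^m *\<^sub>R X \<and> mat_pow X (2*m+2) = (-1)^m *\<^sub>R (X ** X)"
proof (induction m)
  case 0
  then show ?case by simp
next
  case (Suc m)
  have e1: "2 * Suc m + 1 = Suc (Suc (2*m+1))" by simp
  have e2: "2 * Suc m + 2 = Suc (Suc (2*m+2))" by simp
  have a: "mat_pow X (2 * Suc m + 1) = (-1)^(Suc m) *\<^sub>R X"
  proof -
    have "mat_pow X (2 * Suc m + 1) = X ** (X ** ((-1)^m *\<^sub>R X))"
      by (simp only: e1 mat_pow.simps(2) conjunct1[OF Suc.IH])
    also have "\<dots> = (-1)^m *\<^sub>R (X ** (X ** X))" by (simp add: matrix_scalar_ac scalar_matrix_assoc[symmetric])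
    finally show ?thesis using X3 by simp
  qed
  have b: "mat_pow X (2 * Suc m + 2) = (-1)^(Suc m) *\<^sub>R (X ** X)"
  proof -
    have "mat_pow X (2 * Suc m + 2) = X ** (X ** ((-1)^m *\<^sub>R (X ** X)))"
      by (simp only: e2 mat_pow.simps(2) conjunct2[OF Suc.IH])
    also have "\<dots> = (-1)^m *\<^sub>R ((X ** (X ** X)) ** X)" by (simp add: matrix_scalar_ac scalar_matrix_assoc[symmetric] matrix_mul_assoc)
    finally show ?thesis using X3 by (simp add: neg_mmult)
  qed
  show ?case using a b by simp
qed

lemma term_eq:
  assumes X3: "X ** (X ** X) = - X"
  shows "(1 / fact k) *\<^sub>R mat_pow (t *\<^sub>R X) k =
     (if k = 0 then 1 else 0) *\<^sub>R mat 1 + (sin_coeff k * t^k) *\<^sub>R X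
     + ((if k = 0 then 1 else 0) - cos_coeff k * t^k) *\<^sub>R (X ** X)"
proof -
  have "k = 0 \<or> (\<exists>m. k = 2*m+1) \<or> (\<exists>m. k = 2*m+2)" by presburger
  then consider "k = 0" | m where "k = 2*m+1" | m where "k = 2*m+2" by blast
  then show ?thesis
  proof cases
    case 1
    then show ?thesis by (simp add: sin_coeff_def cos_coeff_def)
  next
    case 2
    have h: "mat_pow X k = (-1)^m *\<^sub>R X" unfolding 2 using mat_pow_cyc[OF X3, of m] by blast
    have sc: "sin_coeff k = (-1)^m / fact k" unfolding sin_coeff_def 2 by simp
    have cc: "cos_coeff k = 0" unfolding cos_coeff_def 2 by simp
    show ?thesis unfolding mat_pow_scale h sc cc using 2 by simp
  next
    case 3
    have h: "mat_pow X k = (-1)^m *\<^sub>R (X ** X)" unfolding 3 using mat_pow_cyc[OF X3, of m] by blast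
    have sc: "sin_coeff k = 0" unfolding sin_coeff_def 3 by simp
    have "(2 * m + 2) div 2 = Suc m" by simp
    hence cc: "cos_coeff k = - ((-1)^m / fact k)" unfolding cos_coeff_def 3 by simp
    show ?thesis unfolding mat_pow_scale h sc cc using 3 by simp
  qed
qed

lemma rodrigues:
  assumes X3: "X ** (X ** X) = - X"
  shows "mat_exp (t *\<^sub>R X) = mat 1 + sin t *\<^sub>R X + (1 - cos t) *\<^sub>R (X ** X)"
proof -
  have s1: "(\<lambda>k. (if k = 0 then 1 else 0) *\<^sub>R (mat 1 :: real^3^3)) sums mat 1"
  proof -
    have eq: "(\<lambda>k. (if k = 0 then 1 else 0) *\<^sub>R (mat 1 :: real^3^3)) = (\<lambda>r. if r = 0 then mat 1 else 0)"
      by (rule ext) simp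
    have ss: "(\<lambda>r. if r = 0 then (mat 1 :: real^3^3) else 0) sums mat 1"
      using sums_single[of 0 "\<lambda>_. mat 1 :: real^3^3"] .
    show ?thesis unfolding eq by (rule ss)
  qed
  have s2: "(\<lambda>k. (sin_coeff k * t^k) *\<^sub>R X) sums (sin t *\<^sub>R X)"
    using sums_scaleR_left[OF sin_converges[of t]] by simp
  have c0: "(\<lambda>k. (if k = 0 then 1 else 0)::real) sums 1"
    using sums_single[of 0 "\<lambda>_. 1::real"] by simp
  have s3: "(\<lambda>k. ((if k = 0 then 1 else 0) - cos_coeff k * t^k) *\<^sub>R (X ** X)) sums ((1 - cos t) *\<^sub>R (X ** X))"
    using sums_scaleR_left[OF sums_diff[OF c0 cos_converges[of t]]] by simp
  have "(\<lambda>k. (1 / fact k) *\<^sub>R mat_pow (t *\<^sub>R X) k) sums (mat 1 + sin t *\<^sub>R X + (1 - cos t) *\<^sub>R (X ** X))"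
    unfolding term_eq[OF X3] by (intro sums_add s1 s2 s3)
  then show ?thesis unfolding mat_exp_def by (rule sums_unique[symmetric])
qed

lemma mat3_eq_iff:
  "mat3 a11 a12 a13 a21 a22 a23 a31 a32 a33 = mat3 b11 b12 b13 b21 b22 b23 b31 b32 b33 \<longleftrightarrow>
   a11 = b11 \<and> a12 = b12 \<and> a13 = b13 \<and> a21 = b21 \<and> a22 = b22 \<and> a23 = b23 \<and> a31 = b31 \<and> a32 = b32 \<and> a33 = b33"
  by (auto simp: mat3_def vec_eq_iff forall_3)

lemma mat3_mult:
  "mat3 a11 a12 a13 a21 a22 a23 a31 a32 a33 ** mat3 b11 b12 b13 b21 b22 b23 b31 b32 b33 =
   mat3 (a11*b11+a12*b21+a13*b31) (a11*b12+a12*b22+a13*b32) (a11*b13+a12*b23+a13*b33)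
        (a21*b11+a22*b21+a23*b31) (a21*b12+a22*b22+a23*b32) (a21*b13+a22*b23+a23*b33)
        (a31*b11+a32*b21+a33*b31) (a31*b12+a32*b22+a33*b32) (a31*b13+a32*b23+a33*b33)"
  by (simp add: mat3_def vec_eq_iff forall_3 matrix_matrix_mult_def sum_3)

lemma mat3_add:
  "mat3 a11 a12 a13 a21 a22 a23 a31 a32 a33 + mat3 b11 b12 b13 b21 b22 b23 b31 b32 b33 =
   mat3 (a11+b11) (a12+b12) (a13+b13) (a21+b21) (a22+b22) (a23+b23) (a31+b31) (a32+b32) (a33+b33)"
  by (simp add: mat3_def vec_eq_iff forall_3)

lemma mat3_scale:
  "k *\<^sub>R mat3 a11 a12 a13 a21 a22 a23 a31 a32 a33 =
   mat3 (k*a11) (k*a12) (k*a13) (k*a21) (k*a22) (k*a23) (k*a31) (k*a32) (k*a33)"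
  by (simp add: mat3_def vec_eq_iff forall_3)

lemma mat3_neg:
  "- mat3 a11 a12 a13 a21 a22 a23 a31 a32 a33 =
   mat3 (-a11) (-a12) (-a13) (-a21) (-a22) (-a23) (-a31) (-a32) (-a33)"
  by (simp add: mat3_def vec_eq_iff forall_3)

lemma mat3_one: "(mat 1 :: real^3^3) = mat3 1 0 0 0 1 0 0 0 1"
  by (simp add: mat3_def vec_eq_iff forall_3 mat_def)

lemma Xm_eq: "Xm \<alpha> (pi/4) a b =
  mat3 0 (- cos \<alpha>) (- b * (sin \<alpha> * (sqrt 2 / 2))) (cos \<alpha>) 0 (- a * (sin \<alpha> * (sqrt 2 / 2)))
       (b * (sin \<alpha> * (sqrt 2 / 2))) (a * (sin \<alpha> * (sqrt 2 / 2))) 0"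
  unfolding Xm_def Fm_def G1m_def G2m_def sin_45 cos_45 mat3_scale mat3_add mat3_eq_iff
  by simp

lemma scalars:
  fixes \<alpha> :: real
  assumes a0: "0 < \<alpha>" and a1: "\<alpha> < pi / 4"
  shows "cos (v \<alpha> (s_max \<alpha>)) = - (sin \<alpha>)\<^sup>2 / (1 + (cos \<alpha>)\<^sup>2)"
    and "sin (v \<alpha> (s_max \<alpha>)) = 2 * cos \<alpha> / (1 + (cos \<alpha>)\<^sup>2)"
    and "cos (theta \<alpha>) = (3 * (cos \<alpha>)\<^sup>2 - 1) / (1 + (cos \<alpha>)\<^sup>2)"
    and "sin (theta \<alpha>) = - 4 * (sin \<alpha> * (sqrt 2 / 2)) * cos \<alpha> / (1 + (cos \<alpha>)\<^sup>2)"
proof -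
  define co where "co = cos \<alpha>"
  define s where "s = sin \<alpha>"
  have pyth: "s\<^sup>2 = 1 - co\<^sup>2" unfolding s_def co_def by (simp add: sin_squared_eq)
  have s4: "s ^ 4 = (1 - co\<^sup>2)\<^sup>2" using pyth by (metis power2_eq_square power4_eq_xxxx power_mult_distrib mult.assoc)
  have cpos: "co > 0" unfolding co_def using a0 a1 by (intro cos_gt_zero) auto
  have "cos (pi/4) < co" unfolding co_def using a0 a1 by (intro cos_monotone_0_pi) auto
  hence "sqrt 2 / 2 < co" by (simp add: cos_45)
  hence "(sqrt 2 / 2)\<^sup>2 < co\<^sup>2" by (intro power_strict_mono) auto
  hence x2: "co\<^sup>2 > 1/2" by (simp add: power_divide)
  have P: "1 + co\<^sup>2 > 0" by (simp add: add_pos_nonneg)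
  have Pn: "1 + co\<^sup>2 \<noteq> 0" using P by simp
  have Pn3: "(1 + co\<^sup>2)\<^sup>2 + co\<^sup>2 * (1 + co\<^sup>2)\<^sup>2 \<noteq> 0"
    using P by (metis Pn distrib_right mult_1 mult_eq_0_iff power_not_zero)
  have Pn2: "1 + (co ^ 4 + 2 * co\<^sup>2) \<noteq> 0"
  proof -
    have "0 \<le> co ^ 4" by simp
    thus ?thesis using zero_le_power2[of co] by linarith
  qed
  define w where "w = 1 / (1 + co\<^sup>2)"
  have winv: "inverse (1 + co\<^sup>2) = w" unfolding w_def by (simp add: inverse_eq_divide)
  have hw: "w * (1 + co\<^sup>2) = 1" unfolding w_def using Pn by simp
  define u where "u = - s\<^sup>2 / (1 + co\<^sup>2)"
  have u1: "-1 \<le> u"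
  proof -
    have "s\<^sup>2 \<le> 1 + co\<^sup>2" using pyth zero_le_power2[of co] by linarith
    hence "s\<^sup>2 / (1 + co\<^sup>2) \<le> 1" using P by simp
    thus ?thesis unfolding u_def by simp
  qed
  have u2: "u \<le> 1"
  proof -
    have "0 \<le> s\<^sup>2 / (1 + co\<^sup>2)" using P by simp
    thus ?thesis unfolding u_def by linarith
  qed
  have smx: "s_max \<alpha> = arccos u" unfolding s_max_def u_def s_def co_def by simp
  have csm: "cos (s_max \<alpha>) = u" using smx u1 u2 by simp
  have uw: "u = - s\<^sup>2 * w" unfolding u_def w_def by simp
  have ssm: "sin (s_max \<alpha>) = 2 * co / (1 + co\<^sup>2)"
  proof -
    have "sin (s_max \<alpha>) = sqrt (1 - u\<^sup>2)" using smx u1 u2 by (simp add: sin_arccos)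
    also have "\<dots> = 2 * co / (1 + co\<^sup>2)"
    proof (rule real_sqrt_unique)
      show "(2 * co / (1 + co\<^sup>2))\<^sup>2 = 1 - u\<^sup>2"
        unfolding uw divide_inverse winv using hw pyth by algebra
      show "0 \<le> 2 * co / (1 + co\<^sup>2)" using cpos P by simp
    qed
    finally show ?thesis .
  qed
  have c2sm: "cos (2 * s_max \<alpha>) = 2 * u\<^sup>2 - 1" by (simp add: cos_double_cos csm)
  have s2a: "sin (2 * \<alpha>) = 2 * s * co" unfolding s_def co_def by (simp add: sin_double)
  have c2a: "cos (2 * \<alpha>) = 2 * co\<^sup>2 - 1" unfolding co_def by (simp add: cos_double_cos)
  have c4a: "cos (4 * \<alpha>) = 2 * (2 * co\<^sup>2 - 1)\<^sup>2 - 1"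
    using cos_double_cos[of "2*\<alpha>"] c2a by simp
  define D where "D = ve \<alpha> - vA \<alpha> (s_max \<alpha>) + vB \<alpha> (s_max \<alpha>)"
  define N where "N = vd \<alpha> - vA \<alpha> (s_max \<alpha>) - vB \<alpha> (s_max \<alpha>) - vC \<alpha> (s_max \<alpha>)"
  have ssmw: "sin (s_max \<alpha>) = 2 * co * w" unfolding ssm w_def by simp
  have Deq: "D = 4 * (3 * co\<^sup>2 - 1)\<^sup>2 * w"
    unfolding D_def ve_def vA_def vB_def c2a c4a s2a ssmw csm uw
    unfolding s_def[symmetric] co_def[symmetric]
    using hw pyth by algebra
  have Dpos: "D > 0" unfolding Deq w_def using x2 P by (intro mult_pos_pos) auto
  have Neq: "N = u * D"
    unfolding N_def vd_def vA_def vB_def vC_def c2sm s2a ssmw csm Deq uw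
    unfolding s_def[symmetric] co_def[symmetric]
    using hw pyth by algebra
  have vv: "v \<alpha> (s_max \<alpha>) = arccos u"
    unfolding v_def N_def[symmetric] D_def[symmetric] using Neq Dpos by simp
  show "cos (v \<alpha> (s_max \<alpha>)) = - (sin \<alpha>)\<^sup>2 / (1 + (cos \<alpha>)\<^sup>2)"
    using vv u1 u2 unfolding u_def s_def co_def by simp
  show "sin (v \<alpha> (s_max \<alpha>)) = 2 * cos \<alpha> / (1 + (cos \<alpha>)\<^sup>2)"
    using vv smx ssm unfolding co_def by simp
  define sg where "sg = - 2 * sqrt 2 * s * co / (1 + co\<^sup>2)"
  have sq2: "sqrt 2 ^ 2 = (2::real)" by simp
  have sgsq: "1 - sg\<^sup>2 = ((3 * co\<^sup>2 - 1) / (1 + co\<^sup>2))\<^sup>2"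
    unfolding sg_def divide_inverse winv
    using hw pyth sq2 by algebra
  have sg1: "-1 \<le> sg" "sg \<le> 1"
  proof -
    have "sg\<^sup>2 \<le> 1" using sgsq by (smt (verit) zero_le_power2)
    thus "-1 \<le> sg" "sg \<le> 1" using abs_le_square_iff[of sg 1] by auto
  qed
  have th: "theta \<alpha> = arcsin sg" unfolding theta_def sg_def s_def co_def by simp
  show "cos (theta \<alpha>) = (3 * (cos \<alpha>)\<^sup>2 - 1) / (1 + (cos \<alpha>)\<^sup>2)"
  proof -
    have "cos (theta \<alpha>) = sqrt (1 - sg\<^sup>2)" using th sg1 by (simp add: cos_arcsin)
    also have "\<dots> = (3 * co\<^sup>2 - 1) / (1 + co\<^sup>2)"
      unfolding sgsq using x2 P by (intro real_sqrt_unique) auto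
    finally show ?thesis unfolding co_def .
  qed
  show "sin (theta \<alpha>) = - 4 * (sin \<alpha> * (sqrt 2 / 2)) * cos \<alpha> / (1 + (cos \<alpha>)\<^sup>2)"
    using th sg1 unfolding sg_def s_def co_def by simp
qed


lemma X3_gen:
  fixes co q a b :: real
  assumes "co\<^sup>2 + 2 * q\<^sup>2 = 1" "a\<^sup>2 = 1" "b\<^sup>2 = 1"
  shows "(mat3 0 (- co) (- b * q) co 0 (- a * q) (b * q) (a * q) 0) ** ((mat3 0 (- co) (- b * q) co 0 (- a * q) (b * q) (a * q) 0) ** (mat3 0 (- co) (- b * q) co 0 (- a * q) (b * q) (a * q) 0)) = - (mat3 0 (- co) (- b * q) co 0 (- a * q) (b * q) (a * q) 0)"
  unfolding mat3_mult mat3_neg mat3_eq_iff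
  apply (insert assms, intro conjI)
  apply (simp_all only: mult_1 mult_minus_left minus_minus mult_zero_left mult_zero_right add_0 add_0_right minus_zero)
  apply (simp add: algebra_simps; fail | algebra)+
  done

lemma case_pp:
  fixes co q w c sg :: real
  assumes "co\<^sup>2 + 2 * q\<^sup>2 = 1" "w * (1 + co\<^sup>2) = 1"
     "c = (3 * co\<^sup>2 - 1) * w" "sg = - 4 * q * co * w"
  shows "mat 1 + (2 * co * w) *\<^sub>R (mat3 0 (- co) (- 1 * q) co 0 (- 1 * q) (1 * q) (1 * q) 0) + (1 + 2 * q\<^sup>2 * w) *\<^sub>R ((mat3 0 (- co) (- 1 * q) co 0 (- 1 * q) (1 * q) (1 * q) 0) ** (mat3 0 (- co) (- 1 * q) co 0 (- 1 * q) (1 * q) (1 * q) 0))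
     = mat3 0 (-1) 0  c 0 sg  (-sg) 0 c"
  unfolding mat3_mult mat3_one mat3_scale mat3_add mat3_eq_iff assms(3,4)
  apply (insert assms(1,2), intro conjI)
  apply (simp_all only: mult_1 mult_minus_left minus_minus mult_zero_left mult_zero_right add_0 add_0_right minus_zero)
  apply (simp add: algebra_simps; fail | algebra)+
  done

lemma case_pm:
  fixes co q w c sg :: real
  assumes "co\<^sup>2 + 2 * q\<^sup>2 = 1" "w * (1 + co\<^sup>2) = 1"
     "c = (3 * co\<^sup>2 - 1) * w" "sg = - 4 * q * co * w"
  shows "mat 1 + (2 * co * w) *\<^sub>R (mat3 0 (- co) (- (-1) * q) co 0 (- 1 * q) ((-1) * q) (1 * q) 0) + (1 + 2 * q\<^sup>2 * w) *\<^sub>R ((mat3 0 (- co) (- (-1) * q) co 0 (- 1 * q) ((-1) * q) (1 * q) 0) ** (mat3 0 (- co) (- (-1) * q) co 0 (- 1 * q) ((-1) * q) (1 * q) 0))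
     = mat3 0 (-c) (-sg)  1 0 0  0 (-sg) c"
  unfolding mat3_mult mat3_one mat3_scale mat3_add mat3_eq_iff assms(3,4)
  apply (insert assms(1,2), intro conjI)
  apply (simp_all only: mult_1 mult_minus_left minus_minus mult_zero_left mult_zero_right add_0 add_0_right minus_zero)
  apply (simp add: algebra_simps; fail | algebra)+
  done

lemma case_mm:
  fixes co q w c sg :: real
  assumes "co\<^sup>2 + 2 * q\<^sup>2 = 1" "w * (1 + co\<^sup>2) = 1"
     "c = (3 * co\<^sup>2 - 1) * w" "sg = - 4 * q * co * w"
  shows "mat 1 + (2 * co * w) *\<^sub>R (mat3 0 (- co) (- (-1) * q) co 0 (- (-1) * q) ((-1) * q) ((-1) * q) 0) + (1 + 2 * q\<^sup>2 * w) *\<^sub>R ((mat3 0 (- co) (- (-1) * q) co 0 (- (-1) * q) ((-1) * q) ((-1) * q) 0) ** (mat3 0 (- co) (- (-1) * q) co 0 (- (-1) * q) ((-1) * q) ((-1) * q) 0))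
     = mat3 0 (-1) 0  c 0 (-sg)  sg 0 c"
  unfolding mat3_mult mat3_one mat3_scale mat3_add mat3_eq_iff assms(3,4)
  apply (insert assms(1,2), intro conjI)
  apply (simp_all only: mult_1 mult_minus_left minus_minus mult_zero_left mult_zero_right add_0 add_0_right minus_zero)
  apply (simp add: algebra_simps; fail | algebra)+
  done

lemma case_mp:
  fixes co q w c sg :: real
  assumes "co\<^sup>2 + 2 * q\<^sup>2 = 1" "w * (1 + co\<^sup>2) = 1"
     "c = (3 * co\<^sup>2 - 1) * w" "sg = - 4 * q * co * w"
  shows "mat 1 + (2 * co * w) *\<^sub>R (mat3 0 (- co) (- 1 * q) co 0 (- (-1) * q) (1 * q) ((-1) * q) 0) + (1 + 2 * q\<^sup>2 * w) *\<^sub>R ((mat3 0 (- co) (- 1 * q) co 0 (- (-1) * q) (1 * q) ((-1) * q) 0) ** (mat3 0 (- co) (- 1 * q) co 0 (- (-1) * q) (1 * q) ((-1) * q) 0))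
     = mat3 0 (-c) sg  1 0 0  0 sg c"
  unfolding mat3_mult mat3_one mat3_scale mat3_add mat3_eq_iff assms(3,4)
  apply (insert assms(1,2), intro conjI)
  apply (simp_all only: mult_1 mult_minus_left minus_minus mult_zero_left mult_zero_right add_0 add_0_right minus_zero)
  apply (simp add: algebra_simps; fail | algebra)+
  done

theorem lemma11:
  fixes \<alpha> :: real
  assumes "0 < \<alpha>" and "\<alpha> < pi / 4"
  defines "c \<equiv> cos (theta \<alpha>)" and "\<sigma> \<equiv> sin (theta \<alpha>)"
      and "t \<equiv> v \<alpha> (s_max \<alpha>)"
  shows "mat_exp (t *\<^sub>R Xm \<alpha> (pi / 4) 1 1) = mat3 0 (-1) 0  c 0 \<sigma>  (-\<sigma>) 0 c \<and>
         mat_exp (t *\<^sub>R Xm \<alpha> (pi / 4) 1 (-1)) = mat3 0 (-c) (-\<sigma>)  1 0 0  0 (-\<sigma>) c \<and>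
         mat_exp (t *\<^sub>R Xm \<alpha> (pi / 4) (-1) (-1)) = mat3 0 (-1) 0  c 0 (-\<sigma>)  \<sigma> 0 c \<and>
         mat_exp (t *\<^sub>R Xm \<alpha> (pi / 4) (-1) 1) = mat3 0 (-c) \<sigma>  1 0 0  0 \<sigma> c"
proof -
  define co where "co = cos \<alpha>"
  define q where "q = sin \<alpha> * (sqrt 2 / 2)"
  define w where "w = 1 / (1 + co\<^sup>2)"
  have Pn: "1 + co\<^sup>2 \<noteq> 0" by (smt (verit) zero_le_power2)
  have hw: "w * (1 + co\<^sup>2) = 1" unfolding w_def using Pn by simp
  have sq2: "sqrt 2 ^ 2 = (2::real)" by simp
  have pyth: "(sin \<alpha>)\<^sup>2 = 1 - co\<^sup>2" unfolding co_def by (simp add: sin_squared_eq)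
  have hq: "co\<^sup>2 + 2 * q\<^sup>2 = 1" unfolding q_def power_mult_distrib power_divide sq2 using pyth by (simp add: field_simps)
  have st: "sin t = 2 * co * w" unfolding t_def scalars(2)[OF assms(1,2)] co_def w_def by simp
  have ct: "1 - cos t = 1 + 2 * q\<^sup>2 * w"
    unfolding t_def scalars(1)[OF assms(1,2)] co_def[symmetric] w_def
    using pyth sq2 unfolding q_def by (simp add: power_mult_distrib power_divide field_simps)
  have cc: "c = (3 * co\<^sup>2 - 1) * w" unfolding c_def scalars(3)[OF assms(1,2)] co_def w_def by simp
  have ss: "\<sigma> = - 4 * q * co * w" unfolding \<sigma>_def scalars(4)[OF assms(1,2)] co_def q_def w_def by simp
  have E: "mat_exp (t *\<^sub>R Xm \<alpha> (pi / 4) a b) =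
     mat 1 + (2 * co * w) *\<^sub>R (mat3 0 (- co) (- b * q) co 0 (- a * q) (b * q) (a * q) 0) + (1 + 2 * q\<^sup>2 * w) *\<^sub>R ((mat3 0 (- co) (- b * q) co 0 (- a * q) (b * q) (a * q) 0) ** (mat3 0 (- co) (- b * q) co 0 (- a * q) (b * q) (a * q) 0))"
    if "a\<^sup>2 = 1" "b\<^sup>2 = 1" for a b
  proof -
    have "Xm \<alpha> (pi / 4) a b = mat3 0 (- co) (- b * q) co 0 (- a * q) (b * q) (a * q) 0" unfolding Xm_eq co_def q_def by simp
    moreover have "(mat3 0 (- co) (- b * q) co 0 (- a * q) (b * q) (a * q) 0) ** ((mat3 0 (- co) (- b * q) co 0 (- a * q) (b * q) (a * q) 0) ** (mat3 0 (- co) (- b * q) co 0 (- a * q) (b * q) (a * q) 0)) = - (mat3 0 (- co) (- b * q) co 0 (- a * q) (b * q) (a * q) 0)" by (rule X3_gen[OF hq that])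
    ultimately show ?thesis using rodrigues[of "mat3 0 (- co) (- b * q) co 0 (- a * q) (b * q) (a * q) 0" t] st ct by simp
  qed
  show ?thesis
    using E[of 1 1] E[of 1 "-1"] E[of "-1" "-1"] E[of "-1" 1]
      case_pp[OF hq hw cc ss] case_pm[OF hq hw cc ss] case_mm[OF hq hw cc ss] case_mp[OF hq hw cc ss]
    by simp
qed

end
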